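(* For any $X\in\mathcal{O}^{d,r}$, $\mathbb{P}_\circ\in\mathscr{Q}_2$ and $\rho\ge 0$, with $p=2$, $$\varphi(X)=\Big(\big(\mathrm{tr}((I_d-XX^\top)\Sigma_\circ)\big)^{1/2}+\rho\Big)^2 .$$ Consequently, for every $X\in\mathcal{O}^{d,r}$ and any function $s:\mathbb{R}^{d\times r}\to\mathbb{R}$, $$\varphi(X)+s(X)=\mathrm{tr}((I_d-XX^\top)\Sigma_\circ)+s(X)+2\rho\,\|(I_d-XX^\top)\Sigma_\circ^{1/2}\|_{\mathrm F}+\rho^2,$$ so minimizing $\varphi+s$ over $\mathcal{O}^{d,r}$ is equivalent to minimizing $\mathrm{tr}((I_d-XX^\top)\Sigma_\circ)+s(X)+2\rho\|(I_d-XX^\top)\Sigma_\circ^{1/2}\|_{\mathrm F}$ over $\mathcal{O}^{d,r}$.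
   Context: Let $d,r$ be integers with $1\le r<d$ and $\mathcal{O}^{d,r}=\{X\in\mathbb{R}^{d\times r}: X^\top X=I_r\}$. $\mathscr{Q}_2$ is the set of Borel probability distributions on $\mathbb{R}^d$ with finite second moment, and $\mathbb{W}_2(\mathbb{P}_1,\mathbb{P}_2)=\inf_{\mathbb{Q}\in\mathscr{J}(\mathbb{P}_1,\mathbb{P}_2)}\big(\mathbb{E}_{(\xi_1,\xi_2)\sim\mathbb{Q}}\|\xi_1-\xi_2\|_2^2\big)^{1/2}$, with $\mathscr{J}(\mathbb{P}_1,\mathbb{P}_2)$ the set of couplings. For $X\in\mathcal{O}^{d,r}$, $\varphi(X)=\sup\{\mathbb{E}_{\mathbb{P}}\big[\|(I_d-XX^\top)(\xi-\mathbb{E}_{\mathbb{P}}[\xi])\|_2^2\big]:\mathbb{P}\in\mathscr{Q}_2,\ \mathbb{W}_2(\mathbb{P},\mathbb{P}_\circ)\le\rho\}$. $\Sigma_\circ=\mathbb{E}_{\mathbb{P}_\circ}[(\xi-\mathbb{E}_{\mathbb{P}_\circ}[\xi])(\xi-\mathbb{E}_{\mathbb{P}_\circ}[\xi])^\top]$ and $\Sigma_\circ^{1/2}$ its positive semidefinite square root. *)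

theory Defs
  imports "HOL-Analysis.Analysis" "HOL-Probability.Probability"
begin

definition stiefel :: "(real^'r^'d) set" where
  "stiefel = {X. transpose X ** X = mat 1}"

definition Q2 :: "(real^'d) measure set" where
  "Q2 = {P. prob_space P \<and> sets P = sets borel \<and> integrable P (\<lambda>x. (norm x)\<^sup>2)}"

definition couplings :: "(real^'d) measure \<Rightarrow> (real^'d) measure \<Rightarrow> ((real^'d) \<times> (real^'d)) measure set" where
  "couplings P1 P2 = {Q. prob_space Q \<and> sets Q = sets borel \<and>
      distr Q borel fst = P1 \<and> distr Q borel snd = P2}"

definition W2 :: "(real^'d) measure \<Rightarrow> (real^'d) measure \<Rightarrow> real" where
  "W2 P1 P2 = sqrt (Inf {(\<integral>z. (norm (fst z - snd z))\<^sup>2 \<partial>Q) | Q. Q \<in> couplings P1 P2})"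

definition mean :: "(real^'d) measure \<Rightarrow> real^'d" where
  "mean P = (\<integral>x. x \<partial>P)"

definition covar :: "(real^'d) measure \<Rightarrow> real^'d^'d" where
  "covar P = (\<chi> i j. \<integral>x. (x$i - mean P $ i) * (x$j - mean P $ j) \<partial>P)"

definition psd :: "real^'d^'d \<Rightarrow> bool" where
  "psd S \<longleftrightarrow> transpose S = S \<and> (\<forall>v. v \<bullet> (S *v v) \<ge> 0)"

definition psd_sqrt :: "real^'d^'d \<Rightarrow> real^'d^'d" where
  "psd_sqrt S = (THE R. psd R \<and> R ** R = S)"

definition frob :: "real^'n^'m \<Rightarrow> real" where
  "frob A = sqrt (\<Sum>i\<in>UNIV. \<Sum>j\<in>UNIV. (A$i$j)\<^sup>2)"

definition perp_proj :: "real^'r^'d \<Rightarrow> real^'d^'d" where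
  "perp_proj X = mat 1 - X ** transpose X"

definition phi :: "(real^'d) measure \<Rightarrow> real \<Rightarrow> real^'r^'d \<Rightarrow> real" where
  "phi P0 \<rho> X = Sup {(\<integral>x. ((norm (perp_proj X *v (x - mean P)))\<^sup>2) \<partial>P) | P.
        P \<in> Q2 \<and> W2 P P0 \<le> \<rho>}"

end

theory Submission
  imports Defs
begin


lemma sym_inner:
  fixes S :: "real^'n^'n"
  assumes "transpose S = S"
  shows "x \<bullet> (S *v y) = (S *v x) \<bullet> y"
proof -
  have "x \<bullet> (S *v y) = (x v* S) \<bullet> y" by (simp add: dot_lmul_matrix)
  also have "x v* S = transpose S *v x" by simp
  finally show ?thesis using assms by simp
qed

lemma quad_nonpos_lin_zero:
  fixes a b :: real
  assumes "\<And>t. a * t + b * t\<^sup>2 \<le> 0"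
  shows "a = 0"
proof (rule ccontr)
  assume a: "a \<noteq> 0"
  define k where "k = \<bar>b\<bar> + 1"
  have k: "k > 0" "\<bar>b\<bar> \<le> k" by (auto simp: k_def)
  define t where "t = a / (2*k)"
  have 1: "a * t = a\<^sup>2 / (2*k)" by (simp add: t_def power2_eq_square)
  have 2: "t\<^sup>2 = a\<^sup>2 / (4*k\<^sup>2)" by (simp add: t_def power_divide power2_eq_square)
  have "b * t\<^sup>2 \<ge> - (\<bar>b\<bar> * t\<^sup>2)" by (simp add: abs_mult_pos abs_le_iff)
  moreover have "\<bar>b\<bar> * t\<^sup>2 \<le> k * t\<^sup>2" using k by (simp add: mult_right_mono)
  moreover have "k * t\<^sup>2 = a\<^sup>2 / (4*k)" using k by (simp add: t_def power2_eq_square field_simps)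
  ultimately have "a * t + b * t\<^sup>2 \<ge> a\<^sup>2/(2*k) - a\<^sup>2/(4*k)" using 1 by linarith
  moreover have "a\<^sup>2/(2*k) - a\<^sup>2/(4*k) = a\<^sup>2/(4*k)" using k by (simp add: field_simps)
  moreover have "a\<^sup>2/(4*k) > 0" using a k by simp
  ultimately show False using assms[of t] by linarith
qed

lemma eigen_exists:
  fixes S :: "real^'n^'n"
  assumes sym: "transpose S = S" and V: "subspace V" and ne: "V \<noteq> {0}"
    and inv: "\<And>x. x \<in> V \<Longrightarrow> S *v x \<in> V"
  shows "\<exists>u\<in>V. norm u = 1 \<and> S *v u = (u \<bullet> (S *v u)) *\<^sub>R u"
proof -
  define K where "K = V \<inter> sphere 0 1"
  have cK: "compact K" unfolding K_def
    by (intro closed_Int_compact closed_subspace V compact_sphere)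
  obtain x where x: "x \<in> V" "x \<noteq> 0" using ne V subspace_0 by blast
  have "x /\<^sub>R norm x \<in> K" using x V by (auto simp: K_def subspace_scale)
  hence neK: "K \<noteq> {}" by blast
  have ct: "continuous_on K (\<lambda>x. x \<bullet> (S *v x))"
    by (intro continuous_intros linear_continuous_on matrix_vector_mul_bounded_linear)
  obtain u where u: "u \<in> K" "\<And>y. y \<in> K \<Longrightarrow> y \<bullet> (S *v y) \<le> u \<bullet> (S *v u)"
    using continuous_attains_sup[OF cK neK ct] by blast
  define l where "l = u \<bullet> (S *v u)"
  have uV: "u \<in> V" and nu: "norm u = 1" using u(1) by (auto simp: K_def)
  have bound: "y \<bullet> (S *v y) \<le> l * (norm y)\<^sup>2" if "y \<in> V" for y
  proof (cases "y = 0")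
    case True then show ?thesis by simp
  next
    case False
    have "y /\<^sub>R norm y \<in> K" using that False V by (auto simp: K_def subspace_scale)
    hence "(y /\<^sub>R norm y) \<bullet> (S *v (y /\<^sub>R norm y)) \<le> l" using u(2) l_def by blast
    hence "(y \<bullet> (S *v y)) / (norm y)\<^sup>2 \<le> l"
      by (simp add: matrix_vector_mult_scaleR power2_eq_square divide_simps)
    then show ?thesis using False by (simp add: divide_simps mult.commute)
  qed
  have orth: "w \<bullet> (S *v u - l *\<^sub>R u) = 0" if w: "w \<in> V" for w
  proof -
    have "(2 * (w \<bullet> (S *v u) - l * (u \<bullet> w))) * t + ((w \<bullet> (S *v w)) - l * (norm w)\<^sup>2) * t\<^sup>2 \<le> 0" for t
    proof -
      have "u + t *\<^sub>R w \<in> V" using uV w V by (simp add: subspace_add subspace_scale)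
      from bound[OF this]
      have "(u + t *\<^sub>R w) \<bullet> (S *v (u + t *\<^sub>R w)) \<le> l * (norm (u + t *\<^sub>R w))\<^sup>2" .
      moreover have "(u + t *\<^sub>R w) \<bullet> (S *v (u + t *\<^sub>R w)) =
          l + 2 * t * (w \<bullet> (S *v u)) + t\<^sup>2 * (w \<bullet> (S *v w))"
        using sym_inner[OF sym, of u w] l_def
        by (simp add: matrix_vector_right_distrib matrix_vector_mult_scaleR inner_add_left inner_add_right
            power2_eq_square algebra_simps inner_commute)
      moreover have "(norm (u + t *\<^sub>R w))\<^sup>2 = 1 + 2 * t * (u \<bullet> w) + t\<^sup>2 * (norm w)\<^sup>2"
      proof -
        have uu: "u \<bullet> u = 1" using nu by (simp add: power2_norm_eq_inner[symmetric])
        show ?thesis unfolding power2_norm_eq_inner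
          using uu by (simp add: inner_add_left inner_add_right algebra_simps inner_commute power2_eq_square)
      qed
      ultimately show ?thesis by (simp add: algebra_simps power2_eq_square)
    qed
    from quad_nonpos_lin_zero[OF this] have "w \<bullet> (S *v u) = l * (u \<bullet> w)" by simp
    then show ?thesis by (simp add: inner_diff_right inner_commute)
  qed
  have "S *v u - l *\<^sub>R u \<in> V" using inv[OF uV] uV V by (simp add: subspace_diff subspace_scale)
  from orth[OF this] have "S *v u - l *\<^sub>R u = 0" by simp
  then show ?thesis using uV nu l_def by (intro bexI[of _ u]) auto
qed



lemma eigenbasis_sub:
  fixes S :: "real^'n^'n"
  assumes sym: "transpose S = S"
  shows "subspace V \<Longrightarrow> (\<forall>x\<in>V. S *v x \<in> V) \<Longrightarrow> \<exists>B. B \<subseteq> V \<and> finite B \<and> pairwise orthogonal B \<and>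
     (\<forall>b\<in>B. norm b = 1 \<and> S *v b = (b \<bullet> (S *v b)) *\<^sub>R b) \<and> span B = V"
proof (induction "dim V" arbitrary: V rule: less_induct)
  case (less V)
  show ?case
  proof (cases "V \<subseteq> {0}")
    case True
    then have "V = {0}" using less.prems subspace_0 by blast
    then show ?thesis by (intro exI[of _ "{}"]) auto
  next
    case False
    then have ne: "V \<noteq> {0}" by auto
    obtain u where u: "u \<in> V" "norm u = 1" "S *v u = (u \<bullet> (S *v u)) *\<^sub>R u"
      using eigen_exists[OF sym less.prems(1) ne] less.prems(2) by blast
    define l where "l = u \<bullet> (S *v u)"
    define W where "W = V \<inter> {x. u \<bullet> x = 0}"
    have sW: "subspace W" unfolding W_def
      using less.prems(1) subspace_orthogonal_to_vector[of u]
      by (simp add: subspace_inter orthogonal_def)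
    have iW: "\<forall>x\<in>W. S *v x \<in> W"
    proof
      fix x assume x: "x \<in> W"
      have "u \<bullet> (S *v x) = (S *v u) \<bullet> x" by (rule sym_inner[OF sym])
      also have "\<dots> = l * (u \<bullet> x)" unfolding l_def by (subst u(3)) simp
      finally show "S *v x \<in> W" using x less.prems(2) by (auto simp: W_def)
    qed
    have uW: "u \<notin> W" using u(2) by (auto simp: W_def simp flip: power2_norm_eq_inner)
    have "W \<subset> V" using u(1) uW unfolding W_def by blast
    hence "dim W < dim V" using sW less.prems(1) by (metis dim_psubset span_eq_iff)
    from less.hyps[OF this sW iW] obtain B where
      B: "B \<subseteq> W" "finite B" "pairwise orthogonal B"
         "\<forall>b\<in>B. norm b = 1 \<and> S *v b = (b \<bullet> (S *v b)) *\<^sub>R b" "span B = W" by blast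
    have ortu: "orthogonal u b" if "b \<in> B" for b using B(1) that by (auto simp: W_def orthogonal_def)
    show ?thesis
    proof (intro exI[of _ "insert u B"] conjI)
      show "insert u B \<subseteq> V" using B(1) u(1) by (auto simp: W_def)
      show "finite (insert u B)" using B(2) by simp
      show "pairwise orthogonal (insert u B)" using B(3) ortu
        by (auto simp: pairwise_insert orthogonal_commute)
      show "\<forall>b\<in>insert u B. norm b = 1 \<and> S *v b = (b \<bullet> (S *v b)) *\<^sub>R b" using B(4) u by auto
      show "span (insert u B) = V"
      proof
        show "span (insert u B) \<subseteq> V" using B(1) u(1) less.prems(1)
          by (intro span_minimal) (auto simp: W_def)
        show "V \<subseteq> span (insert u B)"
        proof
          fix x assume x: "x \<in> V"
          have uu: "u \<bullet> u = 1" using u(2) by (simp add: power2_norm_eq_inner[symmetric])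
          have "x - (u \<bullet> x) *\<^sub>R u \<in> W" using x u(1) less.prems(1) uu
            by (auto simp: W_def subspace_diff subspace_scale inner_diff_right)
          hence "x - (u \<bullet> x) *\<^sub>R u \<in> span B" using B(5) by simp
          hence "x - (u \<bullet> x) *\<^sub>R u \<in> span (insert u B)" using span_mono[of B "insert u B"] by auto
          moreover have "(u \<bullet> x) *\<^sub>R u \<in> span (insert u B)" by (simp add: span_base span_scale)
          ultimately have "(x - (u \<bullet> x) *\<^sub>R u) + (u \<bullet> x) *\<^sub>R u \<in> span (insert u B)" by (rule span_add)
          then show "x \<in> span (insert u B)" by simp
        qed
      qed
    qed
  qed
qed

lemma orthonormal_expand:
  fixes B :: "(real^'n) set"
  assumes "finite B" "pairwise orthogonal B" "\<forall>b\<in>B. norm b = 1" "span B = UNIV"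
  shows "x = (\<Sum>b\<in>B. (b \<bullet> x) *\<^sub>R b)"
proof -
  define y where "y = x - (\<Sum>b\<in>B. (b \<bullet> x) *\<^sub>R b)"
  have "orthogonal y c" if c: "c \<in> B" for c
  proof -
    have "(\<Sum>b\<in>B. (b \<bullet> x) *\<^sub>R b) \<bullet> c = (\<Sum>b\<in>B. (b \<bullet> x) * (b \<bullet> c))"
      by (simp add: inner_sum_left)
    also have "\<dots> = (\<Sum>b\<in>B. if b = c then (c \<bullet> x) else 0)"
    proof (rule sum.cong)
      fix b assume b: "b \<in> B"
      show "(b \<bullet> x) * (b \<bullet> c) = (if b = c then (c \<bullet> x) else 0)"
      proof (cases "b = c")
        case True
        then have "b \<bullet> c = 1" using assms(3) c by (simp add: power2_norm_eq_inner[symmetric])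
        then show ?thesis using True by simp
      next
        case False
        then show ?thesis using assms(2) b c by (auto simp: pairwise_def orthogonal_def)
      qed
    qed simp
    also have "\<dots> = c \<bullet> x" using c assms(1) by simp
    finally show ?thesis by (simp add: y_def orthogonal_def inner_diff_right inner_commute)
  qed
  hence "orthogonal y y" using orthogonal_to_span[of y B y] assms(4)
    by (simp add: orthogonal_commute)
  hence "y = 0" by (simp add: orthogonal_def)
  then show ?thesis by (simp add: y_def)
qed



lemma mat_eq_on_basis:
  fixes A C :: "real^'n^'n"
  assumes "finite B" "pairwise orthogonal B" "\<forall>b\<in>B. norm b = 1" "span B = UNIV"
    and "\<And>b. b \<in> B \<Longrightarrow> A *v b = C *v b"
  shows "A = C"
proof -
  have "A *v x = C *v x" for x
  proof -
    have ex: "x = (\<Sum>b\<in>B. (b \<bullet> x) *\<^sub>R b)" by (rule orthonormal_expand[OF assms(1-4)])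
    have "A *v x = (\<Sum>b\<in>B. (b \<bullet> x) *\<^sub>R (A *v b))"
      by (subst ex) (simp add: linear_sum[OF matrix_vector_mul_linear] o_def matrix_vector_mult_scaleR)
    also have "\<dots> = (\<Sum>b\<in>B. (b \<bullet> x) *\<^sub>R (C *v b))" using assms(5) by simp
    also have "\<dots> = C *v x"
      by (subst (2) ex) (simp add: linear_sum[OF matrix_vector_mul_linear] o_def matrix_vector_mult_scaleR)
    finally show ?thesis .
  qed
  then show ?thesis by (simp add: matrix_eq)
qed

lemma root_on_eig:
  fixes R S :: "real^'n^'n"
  assumes R: "psd R" and RR: "R ** R = S" and eig: "S *v b = lam0 *\<^sub>R b" and l: "lam0 \<ge> 0"
  shows "R *v b = sqrt lam0 *\<^sub>R b"
proof -
  define \<mu> where "\<mu> = sqrt lam0"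
  have mu: "\<mu> \<ge> 0" "\<mu> * \<mu> = lam0" using l by (auto simp: \<mu>_def)
  define y where "y = R *v b - \<mu> *\<^sub>R b"
  have Ry: "R *v y = - \<mu> *\<^sub>R y"
  proof -
    have "R *v y = R *v (R *v b) - \<mu> *\<^sub>R (R *v b)"
      by (simp add: y_def matrix_vector_mult_diff_distrib matrix_vector_mult_scaleR)
    also have "R *v (R *v b) = lam0 *\<^sub>R b" using RR eig by (simp add: matrix_vector_mul_assoc)
    finally show ?thesis using mu by (simp add: y_def algebra_simps)
  qed
  have symR: "transpose R = R" and pR: "\<And>v. v \<bullet> (R *v v) \<ge> 0" using R by (auto simp: psd_def)
  have "y \<bullet> (R *v y) = - \<mu> * (y \<bullet> y)" using Ry by simp
  hence "\<mu> * (y \<bullet> y) \<le> 0" using pR[of y] by linarith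
  moreover have "\<mu> * (y \<bullet> y) \<ge> 0" using mu by simp
  ultimately have z: "\<mu> * (y \<bullet> y) = 0" by linarith
  show ?thesis
  proof (cases "\<mu> = 0")
    case False
    then have "y = 0" using z by simp
    then show ?thesis by (simp add: y_def \<mu>_def)
  next
    case True
    then have y: "y = R *v b" "R *v y = 0" using Ry by (auto simp: y_def)
    have "(R *v b) \<bullet> (R *v b) = b \<bullet> (R *v (R *v b))" using sym_inner[OF symR, of b "R *v b"] by simp
    also have "\<dots> = 0" using y by simp
    finally have "R *v b = 0" by simp
    then show ?thesis using True by (simp add: \<mu>_def)
  qed
qed

lemma psd_sqrt_props:
  fixes S :: "real^'n^'n"
  assumes S: "psd S"
  shows "psd (psd_sqrt S) \<and> psd_sqrt S ** psd_sqrt S = S"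
proof -
  have symS: "transpose S = S" and pS: "\<And>v. v \<bullet> (S *v v) \<ge> 0" using S by (auto simp: psd_def)
  obtain B where B: "finite B" "pairwise orthogonal B"
     "\<forall>b\<in>B. norm b = 1 \<and> S *v b = (b \<bullet> (S *v b)) *\<^sub>R b" "span B = UNIV"
    using eigenbasis_sub[OF symS, of UNIV] by auto
  have Bn: "\<forall>b\<in>B. norm b = 1" using B(3) by auto
  define lam where "lam b = b \<bullet> (S *v b)" for b
  have lamnn: "lam b \<ge> 0" for b using pS by (simp add: lam_def)
  have eig: "b \<in> B \<Longrightarrow> S *v b = lam b *\<^sub>R b" for b using B(3) by (simp add: lam_def)
  have bb: "b \<in> B \<Longrightarrow> c \<in> B \<Longrightarrow> b \<bullet> c = (if b = c then 1 else 0)" for b c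
    using Bn B(2) by (auto simp: pairwise_def orthogonal_def power2_norm_eq_inner[symmetric])
  define R0 :: "real^'n^'n" where "R0 = (\<chi> i j. \<Sum>b\<in>B. sqrt (lam b) * (b$i * b$j))"
  have R0v: "R0 *v x = (\<Sum>b\<in>B. (sqrt (lam b) * (b \<bullet> x)) *\<^sub>R b)" for x
    by (simp add: R0_def vec_eq_iff matrix_vector_mult_def inner_vec_def sum_distrib_left
        sum_distrib_right sum_component mult_ac sum.swap[where A=B])
  have R0b: "c \<in> B \<Longrightarrow> R0 *v c = sqrt (lam c) *\<^sub>R c" for c
  proof -
    assume c: "c \<in> B"
    have "R0 *v c = (\<Sum>b\<in>B. if b = c then sqrt (lam c) *\<^sub>R c else 0)"
      unfolding R0v using c by (intro sum.cong) (auto simp: bb)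
    also have "\<dots> = sqrt (lam c) *\<^sub>R c" using c B(1) by simp
    finally show ?thesis .
  qed
  have tR0: "transpose R0 = R0" by (simp add: R0_def transpose_def vec_eq_iff mult.commute)
  have pR0: "v \<bullet> (R0 *v v) \<ge> 0" for v
  proof -
    have "v \<bullet> (R0 *v v) = (\<Sum>b\<in>B. sqrt (lam b) * (b \<bullet> v)\<^sup>2)"
      by (simp add: R0v inner_sum_right power2_eq_square inner_commute mult_ac)
    also have "\<dots> \<ge> 0" using lamnn by (intro sum_nonneg) simp
    finally show ?thesis .
  qed
  have psdR0: "psd R0" using tR0 pR0 by (simp add: psd_def)
  have R0R0: "R0 ** R0 = S"
  proof (rule mat_eq_on_basis[OF B(1,2) Bn B(4)])
    fix b assume b: "b \<in> B"
    have "(R0 ** R0) *v b = R0 *v (R0 *v b)" by (simp add: matrix_vector_mul_assoc)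
    also have "\<dots> = lam b *\<^sub>R b" using b lamnn[of b]
      by (simp add: R0b matrix_vector_mult_scaleR real_sqrt_mult[symmetric])
    finally show "(R0 ** R0) *v b = S *v b" using eig b by simp
  qed
  have uniq: "R = R0" if "psd R" "R ** R = S" for R
  proof (rule mat_eq_on_basis[OF B(1,2) Bn B(4)])
    fix b assume b: "b \<in> B"
    show "R *v b = R0 *v b" using root_on_eig[OF that eig[OF b] lamnn] R0b[OF b] by simp
  qed
  have "\<exists>!R. psd R \<and> R ** R = S" using psdR0 R0R0 uniq by blast
  from theI'[OF this] show ?thesis unfolding psd_sqrt_def .
qed



lemma perp_proj_apply: "perp_proj X *v x = x - X *v (transpose X *v x)"
  by (simp add: perp_proj_def matrix_vector_mult_diff_rdistrib matrix_vector_mul_assoc del: transpose_matrix_vector)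

lemma proj_sym: "transpose (perp_proj X) = perp_proj X"
  by (simp add: perp_proj_def transpose_def vec_eq_iff matrix_matrix_mult_def mat_def mult.commute)

lemma proj_idem_v:
  assumes "X \<in> stiefel"
  shows "perp_proj X *v (perp_proj X *v x) = perp_proj X *v x"
proof -
  have XX: "transpose X ** X = mat 1" using assms by (simp add: stiefel_def)
  have "transpose X *v (perp_proj X *v x) = 0"
    by (simp add: perp_proj_apply matrix_vector_mult_diff_distrib matrix_vector_mul_assoc XX)
  then show ?thesis by (simp add: perp_proj_apply[of X "perp_proj X *v x"])
qed

lemma proj_idem:
  assumes "X \<in> stiefel"
  shows "perp_proj X ** perp_proj X = perp_proj X"
  using proj_idem_v[OF assms] by (simp add: matrix_eq matrix_vector_mul_assoc[symmetric])

lemma proj_norm_sq: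
  assumes "X \<in> stiefel"
  shows "(norm (perp_proj X *v y))\<^sup>2 = y \<bullet> (perp_proj X *v y)"
proof -
  have "(norm (perp_proj X *v y))\<^sup>2 = (perp_proj X *v y) \<bullet> (perp_proj X *v y)"
    by (simp add: power2_norm_eq_inner)
  also have "\<dots> = y \<bullet> (perp_proj X *v (perp_proj X *v y))"
    using sym_inner[OF proj_sym, of y X "perp_proj X *v y"] by simp
  finally show ?thesis using proj_idem_v[OF assms] by simp
qed

lemma proj_norm_le:
  assumes "X \<in> stiefel"
  shows "norm (perp_proj X *v y) \<le> norm y"
proof -
  let ?p = "perp_proj X *v y"
  have o: "?p \<bullet> (y - ?p) = 0"
    using proj_norm_sq[OF assms, of y]
    by (simp add: inner_diff_right inner_commute power2_norm_eq_inner)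
  have "(norm y)\<^sup>2 = (norm (?p + (y - ?p)))\<^sup>2" by simp
  also have "\<dots> = (norm ?p)\<^sup>2 + (norm (y - ?p))\<^sup>2"
  proof -
    have c: "y \<bullet> ?p = ?p \<bullet> y" by (rule inner_commute)
    have e1: "(y - ?p) \<bullet> (y - ?p) = y \<bullet> y - 2 * (?p \<bullet> y) + ?p \<bullet> ?p"
      using c by (simp add: inner_diff_left inner_diff_right)
    have e2: "?p \<bullet> (y - ?p) = ?p \<bullet> y - ?p \<bullet> ?p" by (simp add: inner_diff_right)
    show ?thesis using o e1 e2 by (simp add: power2_norm_eq_inner)
  qed
  finally have "(norm ?p)\<^sup>2 \<le> (norm y)\<^sup>2" by simp
  then show ?thesis by (simp add: power2_le_iff_abs_le)
qed

lemma frob_sq: "(frob A)\<^sup>2 = trace (A ** transpose A)"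
  by (simp add: frob_def trace_def matrix_matrix_mult_def transpose_def power2_eq_square sum_nonneg)

lemma frob_proj_sqrt:
  fixes S :: "real^'d^'d" and X :: "real^'r^'d"
  assumes X: "X \<in> stiefel" and S: "psd S"
  shows "frob (perp_proj X ** psd_sqrt S) = sqrt (trace (perp_proj X ** S))"
proof -
  let ?P = "perp_proj X" and ?R = "psd_sqrt S"
  have R: "transpose ?R = ?R" "?R ** ?R = S" using psd_sqrt_props[OF S] by (auto simp: psd_def)
  have "(frob (?P ** ?R))\<^sup>2 = trace ((?P ** ?R) ** transpose (?P ** ?R))" by (rule frob_sq)
  also have "\<dots> = trace (?P ** (?R ** ?R) ** ?P)"
  proof -
    have "transpose (?P ** ?R) = ?R ** ?P" by (simp only: matrix_transpose_mul R(1) proj_sym)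
    moreover have "(?P ** ?R) ** (?R ** ?P) = ?P ** (?R ** ?R) ** ?P" by (simp only: matrix_mul_assoc)
    ultimately show ?thesis by simp
  qed
  also have "\<dots> = trace (?P ** S ** ?P)" using R(2) by simp
  also have "\<dots> = trace (?P ** (?P ** S))" by (rule trace_mul_sym)
  also have "\<dots> = trace (?P ** S)" by (simp add: matrix_mul_assoc proj_idem[OF X])
  finally have "(frob (?P ** ?R))\<^sup>2 = trace (?P ** S)" .
  moreover have "frob (?P ** ?R) \<ge> 0" by (simp add: frob_def sum_nonneg)
  ultimately show ?thesis by (metis real_sqrt_unique)
qed



lemma exists_perp_unit:
  fixes X :: "real^'r^'d"
  assumes rd: "CARD('r) < CARD('d)"
  shows "\<exists>v. norm v = 1 \<and> perp_proj X *v v = v"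
proof -
  define C where "C = range (\<lambda>j. column j X)"
  have "dim C \<le> card C" by (rule dim_le_card) (auto simp: C_def span_base)
  also have "card C \<le> CARD('r)" unfolding C_def by (rule card_image_le) simp
  finally have "dim C < DIM(real^'d)" using rd by simp
  then obtain w where w: "w \<noteq> 0" "\<And>y. y \<in> span C \<Longrightarrow> orthogonal w y"
    using orthogonal_to_subspace_exists by blast
  have "transpose X *v w = 0"
  proof -
    have "(transpose X *v w) $ j = 0" for j
    proof -
      have "orthogonal w (column j X)" using w(2) by (auto simp: C_def span_base)
      then show ?thesis
        by (simp add: orthogonal_def inner_vec_def matrix_vector_mult_def transpose_def column_def mult.commute)
    qed
    then show ?thesis by (simp add: vec_eq_iff)
  qed
  then have "perp_proj X *v w = w" by (simp add: perp_proj_apply del: transpose_matrix_vector)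
  then show ?thesis using w(1)
    by (intro exI[of _ "w /\<^sub>R norm w"]) (simp add: matrix_vector_mult_scaleR)
qed

lemma Q2_D: assumes "P \<in> Q2" shows "prob_space P" "sets P = sets borel" "integrable P (\<lambda>x. (norm x)\<^sup>2)"
  using assms by (auto simp: Q2_def)

lemma meas_borel: "sets M = sets borel \<Longrightarrow> f \<in> borel_measurable borel \<Longrightarrow> f \<in> borel_measurable M"
  using measurable_cong_sets[of M borel borel borel] by simp

lemma Q2_integrable:
  fixes f :: "real^'d \<Rightarrow> 'b::{banach, second_countable_topology}"
  assumes P: "P \<in> Q2" and m: "f \<in> borel_measurable borel" and b: "\<And>x. norm (f x) \<le> A * (norm x)\<^sup>2 + B"
  shows "integrable P f"
proof -
  interpret prob_space P using Q2_D[OF P] by simp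
  have "integrable P (\<lambda>x. A * (norm x)\<^sup>2 + B)" using Q2_D(3)[OF P] by simp
  then show ?thesis
  proof (rule Bochner_Integration.integrable_bound)
    show "f \<in> borel_measurable P" by (rule meas_borel[OF Q2_D(2)[OF P] m])
    show "AE x in P. norm (f x) \<le> norm (A * (norm x)\<^sup>2 + B)"
      using b by (intro AE_I2) (smt (verit, best) norm_ge_zero real_norm_def)
  qed
qed

lemma norm_diff_sq_le: "(norm (x - y :: 'a::real_normed_vector))\<^sup>2 \<le> 2 * (norm x)\<^sup>2 + 2 * (norm y)\<^sup>2"
proof -
  have "norm (x - y) \<le> norm x + norm y" by (rule norm_triangle_ineq4)
  hence "(norm (x - y))\<^sup>2 \<le> (norm x + norm y)\<^sup>2" by (simp add: power_mono)
  also have "\<dots> \<le> 2 * (norm x)\<^sup>2 + 2 * (norm y)\<^sup>2"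
  proof -
    have "0 \<le> (norm x - norm y)\<^sup>2" by simp
    then show ?thesis by (simp add: power2_eq_square algebra_simps)
  qed
  finally show ?thesis .
qed

lemma norm_le_sq1: "norm (x::'a::real_normed_vector) \<le> (norm x)\<^sup>2 + 1"
proof -
  have "0 \<le> (norm x - 1)\<^sup>2" by simp
  then have "2 * norm x \<le> (norm x)\<^sup>2 + 1" unfolding power2_diff by simp
  moreover have "norm x \<ge> 0" by simp
  ultimately show ?thesis by linarith
qed

lemma cont_mv[continuous_intros]: "continuous_on S f \<Longrightarrow> continuous_on S (\<lambda>x. (A::real^'n^'m) *v f x)"
  by (rule bounded_linear.continuous_on[OF matrix_vector_mul_bounded_linear])

lemma cont_nth[continuous_intros]: "continuous_on S f \<Longrightarrow> continuous_on S (\<lambda>x. (f x :: real^'n) $ i)"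
  by (rule bounded_linear.continuous_on[OF bounded_linear_vec_nth])

lemma Q2_int_comp: "P \<in> Q2 \<Longrightarrow> integrable P (\<lambda>x. (x::real^'d) $ i)"
  by (rule Q2_integrable[where A=1 and B=1])
     (auto intro!: borel_measurable_continuous_onI continuous_intros order.trans[OF component_le_norm_cart norm_le_sq1])

lemma Q2_int_id: "P \<in> Q2 \<Longrightarrow> integrable P (\<lambda>x. x::real^'d)"
  by (rule Q2_integrable[where A=1 and B=1]) (auto intro!: borel_measurable_continuous_onI continuous_intros norm_le_sq1)

lemma sq_comp_le: "((x::real^'d) $ i - a $ i)\<^sup>2 \<le> 2 * (norm x)\<^sup>2 + 2 * (norm a)\<^sup>2"
proof -
  have "\<bar>(x - a) $ i\<bar> \<le> norm (x - a)" by (rule component_le_norm_cart)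
  hence "((x - a) $ i)\<^sup>2 \<le> (norm (x - a))\<^sup>2" by (simp add: power2_le_iff_abs_le abs_le_iff)
  also have "\<dots> \<le> 2 * (norm x)\<^sup>2 + 2 * (norm a)\<^sup>2" by (rule norm_diff_sq_le)
  finally show ?thesis by simp
qed

lemma Q2_int_pair: "P \<in> Q2 \<Longrightarrow> integrable P (\<lambda>x. ((x::real^'d) $ i - a $ i) * (x $ j - b $ j))"
proof (rule Q2_integrable[where A=4 and B="2 * (norm a)\<^sup>2 + 2 * (norm b)\<^sup>2"])
  show "(\<lambda>x. ((x::real^'d) $ i - a $ i) * (x $ j - b $ j)) \<in> borel_measurable borel"
    by (auto intro!: borel_measurable_continuous_onI continuous_intros)
  fix x :: "real^'d"
  have "norm ((x $ i - a $ i) * (x $ j - b $ j)) \<le> (x $ i - a $ i)\<^sup>2 + (x $ j - b $ j)\<^sup>2"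
  proof -
    define u where "u = x $ i - a $ i"
    define w where "w = x $ j - b $ j"
    have "0 \<le> (\<bar>u\<bar> - \<bar>w\<bar>)\<^sup>2" by simp
    moreover have "(\<bar>u\<bar> - \<bar>w\<bar>)\<^sup>2 = u\<^sup>2 + w\<^sup>2 - 2 * (\<bar>u\<bar> * \<bar>w\<bar>)"
      by (simp add: power2_diff power2_abs)
    moreover have "0 \<le> \<bar>u\<bar> * \<bar>w\<bar>" by simp
    ultimately have "\<bar>u\<bar> * \<bar>w\<bar> \<le> u\<^sup>2 + w\<^sup>2" by linarith
    hence "\<bar>u * w\<bar> \<le> u\<^sup>2 + w\<^sup>2" by (simp add: abs_mult)
    then show ?thesis by (simp add: u_def w_def)
  qed
  also have "\<dots> \<le> 4 * (norm x)\<^sup>2 + (2 * (norm a)\<^sup>2 + 2 * (norm b)\<^sup>2)"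
    using sq_comp_le[of x i a] sq_comp_le[of x j b] by linarith
  finally show "norm ((x $ i - a $ i) * (x $ j - b $ j)) \<le> 4 * (norm x)\<^sup>2 + (2 * (norm a)\<^sup>2 + 2 * (norm b)\<^sup>2)" .
qed

lemma quad_form: "y \<bullet> ((A::real^'d^'d) *v y) = (\<Sum>i\<in>UNIV. \<Sum>j\<in>UNIV. A$i$j * (y$i * y$j))"
  by (simp add: inner_vec_def matrix_vector_mult_def sum_distrib_left mult_ac)

lemma quad_integral:
  assumes P: "P \<in> Q2"
  shows "(\<integral>x. (x - a) \<bullet> ((A::real^'d^'d) *v (x - a)) \<partial>P) =
     (\<Sum>i\<in>UNIV. \<Sum>j\<in>UNIV. A$i$j * (\<integral>x. (x$i - a$i) * (x$j - a$j) \<partial>P))"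
proof -
  have "(\<integral>x. (x - a) \<bullet> (A *v (x - a)) \<partial>P) =
        (\<integral>x. (\<Sum>i\<in>UNIV. \<Sum>j\<in>UNIV. A$i$j * ((x$i - a$i) * (x$j - a$j))) \<partial>P)"
    by (simp add: quad_form)
  also have "\<dots> = (\<Sum>i\<in>UNIV. \<integral>x. (\<Sum>j\<in>UNIV. A$i$j * ((x$i - a$i) * (x$j - a$j))) \<partial>P)"
    by (rule Bochner_Integration.integral_sum) (auto intro!: Q2_int_pair[OF P])
  also have "\<dots> = (\<Sum>i\<in>UNIV. \<Sum>j\<in>UNIV. \<integral>x. A$i$j * ((x$i - a$i) * (x$j - a$j)) \<partial>P)"
    by (intro sum.cong refl Bochner_Integration.integral_sum) (auto intro!: Q2_int_pair[OF P])
  also have "\<dots> = (\<Sum>i\<in>UNIV. \<Sum>j\<in>UNIV. A$i$j * (\<integral>x. (x$i - a$i) * (x$j - a$j) \<partial>P))"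
    by simp
  finally show ?thesis .
qed

lemma covar_sym: "covar P $ j $ i = covar P $ i $ j"
  by (simp add: covar_def mult.commute)

lemma val_trace:
  assumes P: "P \<in> Q2" and X: "X \<in> stiefel"
  shows "(\<integral>x. (norm (perp_proj X *v (x - mean P)))\<^sup>2 \<partial>P) = trace (perp_proj X ** covar P)"
proof -
  have "(\<integral>x. (norm (perp_proj X *v (x - mean P)))\<^sup>2 \<partial>P) =
        (\<integral>x. (x - mean P) \<bullet> (perp_proj X *v (x - mean P)) \<partial>P)"
    by (simp add: proj_norm_sq[OF X])
  also have "\<dots> = trace (perp_proj X ** covar P)"
    unfolding quad_integral[OF P] trace_def matrix_matrix_mult_def
    by (simp add: covar_sym) (simp add: covar_def)
  finally show ?thesis .
qed

lemma covar_psd: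
  fixes P :: "(real^'d) measure"
  assumes P: "P \<in> Q2"
  shows "psd (covar P)"
proof -
  have "v \<bullet> (covar P *v v) \<ge> 0" for v
  proof -
    define A :: "real^'d^'d" where "A = (\<chi> i j. v$i * v$j)"
    have "v \<bullet> (covar P *v v) = (\<Sum>i\<in>UNIV. \<Sum>j\<in>UNIV. A$i$j * covar P $ i $ j)"
      by (simp add: quad_form A_def mult_ac)
    also have "\<dots> = (\<integral>x. (x - mean P) \<bullet> (A *v (x - mean P)) \<partial>P)"
      by (simp add: quad_integral[OF P] covar_def)
    also have "\<dots> \<ge> 0"
    proof (rule integral_nonneg_AE, intro AE_I2)
      fix x
      have "(x - mean P) \<bullet> (A *v (x - mean P)) = (v \<bullet> (x - mean P))\<^sup>2"
        unfolding quad_form by (simp add: A_def power2_eq_square inner_vec_def sum_product mult_ac)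
      then show "0 \<le> (x - mean P) \<bullet> (A *v (x - mean P))" by simp
    qed
    finally show ?thesis .
  qed
  moreover have "transpose (covar P) = covar P"
    by (simp add: transpose_def vec_eq_iff covar_sym)
  ultimately show ?thesis by (simp add: psd_def)
qed




lemma mink_scalar:
  fixes a b c :: real
  assumes a: "a \<ge> 0" and b: "b \<ge> 0" and c: "c \<ge> 0"
    and H: "\<And>t. t > 0 \<Longrightarrow> a\<^sup>2 \<le> (1 + t) * b\<^sup>2 + (1 + 1/t) * c\<^sup>2"
  shows "a \<le> b + c"
proof -
  have key: "a\<^sup>2 \<le> (b + c)\<^sup>2 + 2 * e * (b + c)" if e: "e > 0" for e
  proof -
    define t where "t = (c + e) / (b + e)"
    have t: "t > 0" using b c e by (simp add: t_def)
    have be: "b + e > 0" and ce: "c + e > 0" using b c e by auto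
    have "1 + t = (b + e) / (b + e) + (c + e) / (b + e)" using be by (simp add: t_def)
    also have "\<dots> = ((b + e) + (c + e)) / (b + e)" by (rule add_divide_distrib[symmetric])
    finally have "1 + t = ((b + e) + (c + e)) / (b + e)" .
    hence 1: "(1 + t) * b\<^sup>2 = (b + c + 2*e) * (b\<^sup>2 / (b + e))" by (simp only:) (simp add: mult.commute)
    have "1 + 1/t = (c + e) / (c + e) + (b + e) / (c + e)" using ce by (simp add: t_def)
    also have "\<dots> = ((c + e) + (b + e)) / (c + e)" by (rule add_divide_distrib[symmetric])
    finally have "1 + 1/t = ((c + e) + (b + e)) / (c + e)" .
    hence 2: "(1 + 1/t) * c\<^sup>2 = (b + c + 2*e) * (c\<^sup>2 / (c + e))" by (simp only:) (simp add: mult.commute)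
    have 3: "b\<^sup>2 / (b + e) \<le> b" using b e be by (simp add: divide_le_eq power2_eq_square distrib_left)
    have 4: "c\<^sup>2 / (c + e) \<le> c" using c e ce by (simp add: divide_le_eq power2_eq_square distrib_left)
    have pos: "b + c + 2*e \<ge> 0" using b c e by simp
    have "a\<^sup>2 \<le> (b + c + 2*e) * (b\<^sup>2 / (b + e)) + (b + c + 2*e) * (c\<^sup>2 / (c + e))"
      using H[OF t] unfolding 1 2 .
    also have "\<dots> \<le> (b + c + 2*e) * b + (b + c + 2*e) * c"
      using mult_left_mono[OF 3 pos] mult_left_mono[OF 4 pos] by linarith
    also have "\<dots> = (b + c)\<^sup>2 + 2 * e * (b + c)" by (simp add: power2_eq_square algebra_simps)
    finally show ?thesis .
  qed
  have "a\<^sup>2 \<le> (b + c)\<^sup>2"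
  proof (rule field_le_epsilon)
    fix e :: real assume e: "e > 0"
    define e' where "e' = e / (2 * (b + c) + 1)"
    have e': "e' > 0" using e b c by (simp add: e'_def)
    have "2 * e' * (b + c) = e * (2 * (b + c) / (2 * (b + c) + 1))" unfolding e'_def by (simp add: divide_simps)
    also have "\<dots> \<le> e * 1" using e b c by (intro mult_left_mono) (simp_all add: divide_le_eq)
    finally have "2 * e' * (b + c) \<le> e" by simp
    then show "a\<^sup>2 \<le> (b + c)\<^sup>2 + e" using key[OF e'] by linarith
  qed
  then show ?thesis by (rule power2_le_imp_le) (use b c in simp)
qed


lemma mink_point:
  fixes g h :: "'a::real_inner"
  assumes t: "t > 0"
  shows "(norm (g + h))\<^sup>2 \<le> (1 + t) * (norm g)\<^sup>2 + (1 + 1/t) * (norm h)\<^sup>2"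
proof -
  define x where "x = norm g"
  define y where "y = norm h"
  have "norm (g + h) \<le> x + y" by (simp add: x_def y_def norm_triangle_ineq)
  hence "(norm (g + h))\<^sup>2 \<le> (x + y)\<^sup>2" by (simp add: power_mono)
  moreover have "2 * x * y \<le> t * x\<^sup>2 + y\<^sup>2 / t"
  proof -
    have "0 \<le> (t * x - y)\<^sup>2" by simp
    hence h: "t * (2 * x * y) \<le> t * (t * x\<^sup>2) + y\<^sup>2"
      by (simp add: power2_diff power2_eq_square algebra_simps)
    have "t * (t * x\<^sup>2 + y\<^sup>2 / t) = t * (t * x\<^sup>2) + y\<^sup>2" using t by (simp add: distrib_left)
    hence "t * (2 * x * y) \<le> t * (t * x\<^sup>2 + y\<^sup>2 / t)" using h by simp
    then show ?thesis using mult_le_cancel_left_pos[OF t] by blast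
  qed
  ultimately show ?thesis
    by (simp add: x_def y_def power2_sum field_simps)
qed


lemma marg_snd:
  assumes "prob_space M" "prob_space N"
  shows "distr (M \<Otimes>\<^sub>M N) N snd = N"
proof (intro measure_eqI)
  interpret N: prob_space N by fact
  interpret M: prob_space M by fact
  fix A assume A: "A \<in> sets (distr (M \<Otimes>\<^sub>M N) N snd)"
  then have A': "A \<in> sets N" by simp
  have "emeasure (distr (M \<Otimes>\<^sub>M N) N snd) A = emeasure (M \<Otimes>\<^sub>M N) (space M \<times> A)"
    using A' by (auto simp add: emeasure_distr space_pair_measure dest: sets.sets_into_space
        intro!: arg_cong2[where f=emeasure])
  also have "\<dots> = emeasure M (space M) * emeasure N A"
    using A' by (intro N.emeasure_pair_measure_Times) auto
  finally show "emeasure (distr (M \<Otimes>\<^sub>M N) N snd) A = emeasure N A"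
    by (simp add: M.emeasure_space_1)
qed simp

lemma marg_fst:
  assumes "prob_space M" "prob_space N"
  shows "distr (M \<Otimes>\<^sub>M N) M fst = M"
  using prob_space.distr_pair_fst[OF assms(2), of M] .

lemma cont_meas: "sets M = sets borel \<Longrightarrow> continuous_on UNIV f \<Longrightarrow> f \<in> borel_measurable M"
  by (erule meas_borel) (erule borel_measurable_continuous_onI)

lemma product_coupling:
  fixes P P0 :: "(real^'d) measure"
  assumes P: "P \<in> Q2" and P0: "P0 \<in> Q2"
  shows "P \<Otimes>\<^sub>M P0 \<in> couplings P P0"
proof -
  have ps: "prob_space P" "prob_space P0" using Q2_D P P0 by auto
  have "sets (P \<Otimes>\<^sub>M P0) = sets (borel \<Otimes>\<^sub>M borel)"
    using Q2_D(2)[OF P] Q2_D(2)[OF P0] by (intro sets_pair_measure_cong) auto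
  also have "\<dots> = sets (borel :: ((real^'d) \<times> (real^'d)) measure)" by (metis borel_prod)
  finally have s: "sets (P \<Otimes>\<^sub>M P0) = sets (borel :: ((real^'d) \<times> (real^'d)) measure)" .
  have "distr (P \<Otimes>\<^sub>M P0) borel fst = distr (P \<Otimes>\<^sub>M P0) P fst"
    using Q2_D(2)[OF P] by (intro distr_cong) auto
  also have "\<dots> = P" by (rule marg_fst[OF ps])
  finally have 1: "distr (P \<Otimes>\<^sub>M P0) borel fst = P" .
  have "distr (P \<Otimes>\<^sub>M P0) borel snd = distr (P \<Otimes>\<^sub>M P0) P0 snd"
    using Q2_D(2)[OF P0] by (intro distr_cong) auto
  also have "\<dots> = P0" by (rule marg_snd[OF ps])
  finally have 2: "distr (P \<Otimes>\<^sub>M P0) borel snd = P0" .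
  show ?thesis unfolding couplings_def using s 1 2 prob_space_pair[OF ps] by auto
qed

lemma coupling_fst:
  fixes F :: "real^'d \<Rightarrow> 'b::{banach, second_countable_topology}"
  assumes Q: "Q \<in> couplings P P0" and F: "F \<in> borel_measurable borel"
  shows "integrable Q (\<lambda>z. F (fst z)) \<longleftrightarrow> integrable P F" "(\<integral>z. F (fst z) \<partial>Q) = (\<integral>x. F x \<partial>P)"
proof -
  have s: "sets Q = sets borel" and d: "distr Q borel fst = P" using Q by (auto simp: couplings_def)
  have m: "fst \<in> measurable Q borel"
    using cont_meas[OF s, of fst] by (simp add: continuous_on_fst)
  show "integrable Q (\<lambda>z. F (fst z)) \<longleftrightarrow> integrable P F"
    using integrable_distr_eq[OF m F] d by simp
  show "(\<integral>z. F (fst z) \<partial>Q) = (\<integral>x. F x \<partial>P)"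
    using integral_distr[OF m F] d by simp
qed

lemma coupling_snd:
  fixes F :: "real^'d \<Rightarrow> 'b::{banach, second_countable_topology}"
  assumes Q: "Q \<in> couplings P P0" and F: "F \<in> borel_measurable borel"
  shows "integrable Q (\<lambda>z. F (snd z)) \<longleftrightarrow> integrable P0 F" "(\<integral>z. F (snd z) \<partial>Q) = (\<integral>x. F x \<partial>P0)"
proof -
  have s: "sets Q = sets borel" and d: "distr Q borel snd = P0" using Q by (auto simp: couplings_def)
  have m: "snd \<in> measurable Q borel"
    using cont_meas[OF s, of snd] by (simp add: continuous_on_snd)
  show "integrable Q (\<lambda>z. F (snd z)) \<longleftrightarrow> integrable P0 F"
    using integrable_distr_eq[OF m F] d by simp
  show "(\<integral>z. F (snd z) \<partial>Q) = (\<integral>x. F x \<partial>P0)"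
    using integral_distr[OF m F] d by simp
qed



lemma proj_sq_bound:
  assumes X: "X \<in> stiefel"
  shows "norm ((norm (perp_proj X *v (x - m)))\<^sup>2) \<le> 2 * (norm x)\<^sup>2 + 2 * (norm m)\<^sup>2"
proof -
  have "norm (perp_proj X *v (x - m)) \<le> norm (x - m)" by (rule proj_norm_le[OF X])
  hence "(norm (perp_proj X *v (x - m)))\<^sup>2 \<le> (norm (x - m))\<^sup>2" by (simp add: power_mono)
  also have "\<dots> \<le> 2 * (norm x)\<^sup>2 + 2 * (norm m)\<^sup>2" by (rule norm_diff_sq_le)
  finally show ?thesis by simp
qed

lemma Q2_int_proj:
  assumes P: "P \<in> Q2" and X: "X \<in> stiefel"
  shows "integrable P (\<lambda>x. (norm (perp_proj X *v (x - m)))\<^sup>2)"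
  by (rule Q2_integrable[OF P _ proj_sq_bound[OF X]])
     (auto intro!: borel_measurable_continuous_onI continuous_intros)

lemma coupling_bound:
  fixes P P0 :: "(real^'d) measure" and X :: "real^'r^'d"
  assumes P: "P \<in> Q2" and P0: "P0 \<in> Q2" and X: "X \<in> stiefel" and Q: "Q \<in> couplings P P0"
  shows "sqrt (\<integral>x. (norm (perp_proj X *v (x - mean P)))\<^sup>2 \<partial>P)
     \<le> sqrt (\<integral>x. (norm (perp_proj X *v (x - mean P0)))\<^sup>2 \<partial>P0) + sqrt (\<integral>z. (norm (fst z - snd z))\<^sup>2 \<partial>Q)"
proof -
  let ?\<Pi> = "perp_proj X"
  define mP where "mP = mean P"
  define m0 where "m0 = mean P0"
  define \<delta> where "\<delta> = mP - m0"
  have sQ: "sets Q = sets borel" and pQ: "prob_space Q" using Q by (auto simp: couplings_def)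
  interpret Q: prob_space Q by (rule pQ)
  define F1 where "F1 x = (norm (?\<Pi> *v (x - mP)))\<^sup>2" for x
  define F0 where "F0 x = (norm (?\<Pi> *v (x - m0)))\<^sup>2" for x
  have mF1: "F1 \<in> borel_measurable borel" unfolding F1_def
    by (auto intro!: borel_measurable_continuous_onI continuous_intros)
  have mF0: "F0 \<in> borel_measurable borel" unfolding F0_def
    by (auto intro!: borel_measurable_continuous_onI continuous_intros)
  have mN: "(\<lambda>x::real^'d. (norm x)\<^sup>2) \<in> borel_measurable borel"
    by (auto intro!: borel_measurable_continuous_onI continuous_intros)
  have mI: "(\<lambda>x::real^'d. x) \<in> borel_measurable borel" by simp
  have i1: "integrable Q (\<lambda>z. F1 (fst z))" and e1: "(\<integral>z. F1 (fst z) \<partial>Q) = (\<integral>x. F1 x \<partial>P)"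
  proof -
    have "integrable P F1" unfolding F1_def by (rule Q2_int_proj[OF P X])
    then show "integrable Q (\<lambda>z. F1 (fst z))" "(\<integral>z. F1 (fst z) \<partial>Q) = (\<integral>x. F1 x \<partial>P)"
      using coupling_fst[OF Q mF1] by auto
  qed
  have i0: "integrable Q (\<lambda>z. F0 (snd z))" and e0: "(\<integral>z. F0 (snd z) \<partial>Q) = (\<integral>x. F0 x \<partial>P0)"
  proof -
    have "integrable P0 F0" unfolding F0_def by (rule Q2_int_proj[OF P0 X])
    then show "integrable Q (\<lambda>z. F0 (snd z))" "(\<integral>z. F0 (snd z) \<partial>Q) = (\<integral>x. F0 x \<partial>P0)"
      using coupling_snd[OF Q mF0] by auto
  qed
  have iNx: "integrable Q (\<lambda>z. (norm (fst z))\<^sup>2)"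
    using coupling_fst[OF Q mN] Q2_D(3)[OF P] by auto
  have iNy: "integrable Q (\<lambda>z. (norm (snd z))\<^sup>2)"
    using coupling_snd[OF Q mN] Q2_D(3)[OF P0] by auto
  have ix: "integrable Q (\<lambda>z. fst z)" and ex: "(\<integral>z. fst z \<partial>Q) = mP"
    using coupling_fst[OF Q mI] Q2_int_id[OF P] by (auto simp: mP_def mean_def)
  have iy: "integrable Q (\<lambda>z. snd z)" and ey: "(\<integral>z. snd z \<partial>Q) = m0"
    using coupling_snd[OF Q mI] Q2_int_id[OF P0] by (auto simp: m0_def mean_def)
  define w where "w z = fst z - snd z" for z :: "(real^'d) \<times> (real^'d)"
  have iw: "integrable Q w" unfolding w_def using ix iy by simp
  have ew: "(\<integral>z. w z \<partial>Q) = \<delta>" unfolding w_def \<delta>_def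
    using ix iy ex ey by (simp add: Bochner_Integration.integral_diff)
  have iW: "integrable Q (\<lambda>z. (norm (w z))\<^sup>2)"
  proof (rule Bochner_Integration.integrable_bound)
    show "integrable Q (\<lambda>z. 2 * (norm (fst z))\<^sup>2 + 2 * (norm (snd z))\<^sup>2)" using iNx iNy by simp
    show "(\<lambda>z. (norm (w z))\<^sup>2) \<in> borel_measurable Q" unfolding w_def
      by (rule cont_meas[OF sQ]) (auto intro!: continuous_intros)
    show "AE z in Q. norm ((norm (w z))\<^sup>2) \<le> norm (2 * (norm (fst z))\<^sup>2 + 2 * (norm (snd z))\<^sup>2)"
      using norm_diff_sq_le by (intro AE_I2) (simp add: w_def)
  qed
  have expand: "(norm (w z - \<delta>))\<^sup>2 = (norm (w z))\<^sup>2 - 2 * (\<delta> \<bullet> w z) + (norm \<delta>)\<^sup>2" for z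
    by (simp add: power2_norm_eq_inner inner_diff_left inner_diff_right inner_commute)
  have iWd: "integrable Q (\<lambda>z. (norm (w z - \<delta>))\<^sup>2)"
    unfolding expand using iW iw by (intro Bochner_Integration.integrable_add Bochner_Integration.integrable_diff) auto
  have eWd: "(\<integral>z. (norm (w z - \<delta>))\<^sup>2 \<partial>Q) = (\<integral>z. (norm (w z))\<^sup>2 \<partial>Q) - (norm \<delta>)\<^sup>2"
  proof -
    have "(\<integral>z. (norm (w z - \<delta>))\<^sup>2 \<partial>Q) = (\<integral>z. (norm (w z))\<^sup>2 - 2 * (\<delta> \<bullet> w z) \<partial>Q) + (norm \<delta>)\<^sup>2"
      unfolding expand using iW iw
      by (subst Bochner_Integration.integral_add) (auto simp: Q.prob_space)
    also have "(\<integral>z. (norm (w z))\<^sup>2 - 2 * (\<delta> \<bullet> w z) \<partial>Q) = (\<integral>z. (norm (w z))\<^sup>2 \<partial>Q) - 2 * (\<delta> \<bullet> \<delta>)"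
      using iW iw ew by (subst Bochner_Integration.integral_diff) auto
    finally show ?thesis by (simp add: power2_norm_eq_inner)
  qed
  define H where "H z = (norm (?\<Pi> *v (w z - \<delta>)))\<^sup>2" for z
  have iH: "integrable Q H"
  proof (rule Bochner_Integration.integrable_bound[OF iWd])
    show "H \<in> borel_measurable Q" unfolding H_def w_def
      by (rule cont_meas[OF sQ]) (auto intro!: continuous_intros)
    show "AE z in Q. norm (H z) \<le> norm ((norm (w z - \<delta>))\<^sup>2)"
      using proj_norm_le[OF X] by (intro AE_I2) (simp add: H_def power_mono)
  qed
  have HC: "(\<integral>z. H z \<partial>Q) \<le> (\<integral>z. (norm (w z))\<^sup>2 \<partial>Q)"
  proof -
    have "(\<integral>z. H z \<partial>Q) \<le> (\<integral>z. (norm (w z - \<delta>))\<^sup>2 \<partial>Q)"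
      using proj_norm_le[OF X] by (intro integral_mono[OF iH iWd]) (simp add: H_def power_mono)
    moreover have "(norm \<delta>)\<^sup>2 \<ge> 0" by simp
    ultimately show ?thesis using eWd by linarith
  qed
  have split: "?\<Pi> *v (fst z - mP) = ?\<Pi> *v (snd z - m0) + ?\<Pi> *v (w z - \<delta>)" for z
  proof -
    have "fst z - mP = (snd z - m0) + (w z - \<delta>)" by (simp add: w_def \<delta>_def)
    then show ?thesis by (simp only: matrix_vector_right_distrib)
  qed
  define A where "A = (\<integral>x. F1 x \<partial>P)"
  define B where "B = (\<integral>x. F0 x \<partial>P0)"
  define Cc where "Cc = (\<integral>z. H z \<partial>Q)"
  have A0: "A \<ge> 0" unfolding A_def F1_def by simp
  have B0: "B \<ge> 0" unfolding B_def F0_def by simp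
  have C0: "Cc \<ge> 0" unfolding Cc_def H_def by simp
  have ineq: "A \<le> (1 + t) * B + (1 + 1/t) * Cc" if t: "t > 0" for t
  proof -
    have "A = (\<integral>z. F1 (fst z) \<partial>Q)" using e1 by (simp add: A_def)
    also have "\<dots> \<le> (\<integral>z. (1 + t) * F0 (snd z) + (1 + 1/t) * H z \<partial>Q)"
    proof (rule integral_mono[OF i1])
      show "integrable Q (\<lambda>z. (1 + t) * F0 (snd z) + (1 + 1/t) * H z)" using i0 iH by simp
      fix z
      show "F1 (fst z) \<le> (1 + t) * F0 (snd z) + (1 + 1/t) * H z"
        unfolding F1_def F0_def H_def split by (rule mink_point[OF t])
    qed
    also have "\<dots> = (1 + t) * B + (1 + 1/t) * Cc"
      using i0 iH e0 by (simp add: B_def Cc_def)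
    finally show ?thesis .
  qed
  have "sqrt A \<le> sqrt B + sqrt Cc"
    by (rule mink_scalar) (use ineq A0 B0 C0 in auto)
  also have "sqrt Cc \<le> sqrt (\<integral>z. (norm (fst z - snd z))\<^sup>2 \<partial>Q)"
    using HC by (simp add: Cc_def w_def)
  finally show ?thesis by (simp add: A_def B_def F1_def F0_def mP_def m0_def)
qed



definition coin :: "bool measure" where "coin = measure_pmf (bernoulli_pmf (1/2))"

lemma coin_prob: "prob_space coin" unfolding coin_def by (rule prob_space_measure_pmf)

lemma coin_integral:
  fixes f :: "bool \<Rightarrow> 'b::{banach, second_countable_topology}"
  shows "integrable coin f" "(\<integral>b. f b \<partial>coin) = (1/2) *\<^sub>R (f True + f False)"
proof -
  show "integrable coin f" unfolding coin_def by (rule integrable_measure_pmf_finite) simp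
  have "(\<integral>b. f b \<partial>coin) = (\<Sum>a\<in>UNIV. pmf (bernoulli_pmf (1/2)) a *\<^sub>R f a)"
    unfolding coin_def by (rule integral_measure_pmf) auto
  also have "\<dots> = (1/2) *\<^sub>R (f True + f False)" by (simp add: UNIV_bool scaleR_add_right)
  finally show "(\<integral>b. f b \<partial>coin) = (1/2) *\<^sub>R (f True + f False)" .
qed

lemma int_M:
  fixes G :: "real^'d \<Rightarrow> bool \<Rightarrow> 'b::{banach, second_countable_topology}"
  assumes P0: "P0 \<in> Q2"
    and m: "\<And>b. (\<lambda>x. G x b) \<in> borel_measurable borel"
    and i: "\<And>b. integrable P0 (\<lambda>x. G x b)"
  shows "integrable (P0 \<Otimes>\<^sub>M coin) (\<lambda>z. G (fst z) (snd z))"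
    "(\<integral>z. G (fst z) (snd z) \<partial>(P0 \<Otimes>\<^sub>M coin)) = (\<integral>x. (1/2) *\<^sub>R (G x True + G x False) \<partial>P0)"
proof -
  interpret P0: prob_space P0 using Q2_D[OF P0] by simp
  interpret C: prob_space coin by (rule coin_prob)
  interpret pair_sigma_finite P0 coin ..
  have sP0: "sets P0 = sets borel" using Q2_D[OF P0] by simp
  have mT[measurable]: "(\<lambda>x. G x True) \<in> borel_measurable P0" by (rule meas_borel[OF sP0 m])
  have mF[measurable]: "(\<lambda>x. G x False) \<in> borel_measurable P0" by (rule meas_borel[OF sP0 m])
  have eq: "(\<lambda>z. G (fst z) (snd z)) = (\<lambda>z. if snd z then G (fst z) True else G (fst z) False)"
    by (auto simp: fun_eq_iff)
  have sc: "sets coin = UNIV" by (simp add: coin_def)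
  have ms: "Measurable.pred (P0 \<Otimes>\<^sub>M coin) (\<lambda>z. snd z)"
  proof -
    have e: "{x \<in> space (P0 \<Otimes>\<^sub>M coin). snd x} = snd -` {True} \<inter> space (P0 \<Otimes>\<^sub>M coin)" by auto
    show ?thesis unfolding pred_def e by (rule measurable_sets[OF measurable_snd]) (simp add: sc)
  qed
  have meas: "(\<lambda>z. G (fst z) (snd z)) \<in> borel_measurable (P0 \<Otimes>\<^sub>M coin)"
    unfolding eq by (intro measurable_If ms[unfolded pred_def] measurable_compose[OF measurable_fst mT]
        measurable_compose[OF measurable_fst mF])
  show int: "integrable (P0 \<Otimes>\<^sub>M coin) (\<lambda>z. G (fst z) (snd z))"
  proof (rule Fubini_integrable[OF meas])
    have "(\<lambda>x. \<integral>y. norm (G (fst (x, y)) (snd (x, y))) \<partial>coin) = (\<lambda>x. (1/2) * (norm (G x True) + norm (G x False)))"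
      by (simp add: coin_integral)
    moreover have "integrable P0 (\<lambda>x. (1/2) * (norm (G x True) + norm (G x False)))"
      using i by simp
    ultimately show "integrable P0 (\<lambda>x. \<integral>y. norm (G (fst (x, y)) (snd (x, y))) \<partial>coin)" by simp
    show "AE x in P0. integrable coin (\<lambda>y. G (fst (x, y)) (snd (x, y)))" by (simp add: coin_integral)
  qed
  show "(\<integral>z. G (fst z) (snd z) \<partial>(P0 \<Otimes>\<^sub>M coin)) = (\<integral>x. (1/2) *\<^sub>R (G x True + G x False) \<partial>P0)"
    using integral_fst'[OF int] by (simp add: coin_integral)
qed

lemma meas_M:
  fixes G :: "real^'d \<Rightarrow> bool \<Rightarrow> 'b::topological_space"
  assumes sP0: "sets P0 = sets borel"
    and m: "\<And>b. (\<lambda>x. G x b) \<in> borel_measurable borel"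
  shows "(\<lambda>z. G (fst z) (snd z)) \<in> borel_measurable (P0 \<Otimes>\<^sub>M coin)"
proof -
  have mT: "(\<lambda>x. G x True) \<in> borel_measurable P0" by (rule meas_borel[OF sP0 m])
  have mF: "(\<lambda>x. G x False) \<in> borel_measurable P0" by (rule meas_borel[OF sP0 m])
  have eq: "(\<lambda>z. G (fst z) (snd z)) = (\<lambda>z. if snd z then G (fst z) True else G (fst z) False)"
    by (auto simp: fun_eq_iff)
  have sc: "sets coin = UNIV" by (simp add: coin_def)
  have ms: "{x \<in> space (P0 \<Otimes>\<^sub>M coin). snd x} \<in> sets (P0 \<Otimes>\<^sub>M coin)"
  proof -
    have e: "{x \<in> space (P0 \<Otimes>\<^sub>M coin). snd x} = snd -` {True} \<inter> space (P0 \<Otimes>\<^sub>M coin)" by auto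
    show ?thesis unfolding e by (rule measurable_sets[OF measurable_snd]) (simp add: sc)
  qed
  show ?thesis
    unfolding eq by (intro measurable_If ms measurable_compose[OF measurable_fst mT]
        measurable_compose[OF measurable_fst mF])
qed

lemma norm_comb_sq:
  fixes y v :: "'a::real_inner"
  shows "(norm (a *\<^sub>R y + s *\<^sub>R v))\<^sup>2 = a\<^sup>2 * (norm y)\<^sup>2 + 2 * a * s * (y \<bullet> v) + s\<^sup>2 * (norm v)\<^sup>2"
  unfolding power2_norm_eq_inner
  by (simp add: inner_add_left inner_add_right inner_commute power2_eq_square algebra_simps)

lemma sq_lin_bound:
  fixes u n K L :: real
  assumes "0 \<le> u" "u \<le> K * n + L" "0 \<le> K" "0 \<le> n" "0 \<le> L"
  shows "norm (u\<^sup>2) \<le> (2 * K\<^sup>2) * n\<^sup>2 + 2 * L\<^sup>2"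
proof -
  have "u\<^sup>2 \<le> (K * n + L)\<^sup>2" using assms by (simp add: power_mono)
  also have "\<dots> \<le> 2 * (K * n)\<^sup>2 + 2 * L\<^sup>2"
  proof -
    have "0 \<le> (K * n - L)\<^sup>2" by simp
    then show ?thesis by (simp add: power2_sum power2_diff)
  qed
  finally show ?thesis by (simp add: power_mult_distrib)
qed

definition sg :: "bool \<Rightarrow> real" where "sg b = (if b then 1 else -1)"

lemma construct:
  fixes P0 :: "(real^'d) measure" and X :: "real^'r^'d"
  assumes P0: "P0 \<in> Q2" and X: "X \<in> stiefel" and v: "norm v = 1" "perp_proj X *v v = v"
    and c: "c \<ge> 0" and r: "r \<ge> 0"
  shows "\<exists>P\<in>Q2. (\<integral>x. (norm (perp_proj X *v (x - mean P)))\<^sup>2 \<partial>P)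
             = (1 + c)\<^sup>2 * (\<integral>x. (norm (perp_proj X *v (x - mean P0)))\<^sup>2 \<partial>P0) + r\<^sup>2
          \<and> (\<exists>Q\<in>couplings P P0. (\<integral>z. (norm (fst z - snd z))\<^sup>2 \<partial>Q)
             = c\<^sup>2 * (\<integral>x. (norm (perp_proj X *v (x - mean P0)))\<^sup>2 \<partial>P0) + r\<^sup>2)"
proof -
  let ?\<Pi> = "perp_proj X"
  define m0 where "m0 = mean P0"
  define y where "y x = ?\<Pi> *v (x - m0)" for x
  define \<tau> where "\<tau> = (\<integral>x. (norm (y x))\<^sup>2 \<partial>P0)"
  define \<Phi> where "\<Phi> x b = x + c *\<^sub>R y x + (sg b * r) *\<^sub>R v" for x b
  define M where "M = P0 \<Otimes>\<^sub>M coin"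
  interpret P0: prob_space P0 using Q2_D[OF P0] by simp
  have sP0: "sets P0 = sets borel" using Q2_D[OF P0] by simp
  have pM: "prob_space M" unfolding M_def by (rule prob_space_pair[OF P0.prob_space_axioms coin_prob])
  interpret M: prob_space M by (rule pM)
  have cy: "continuous_on UNIV y" unfolding y_def by (intro continuous_intros)
  have mPhi: "(\<lambda>z. \<Phi> (fst z) (snd z)) \<in> borel_measurable M"
    unfolding M_def by (rule meas_M[OF sP0]) (auto simp: \<Phi>_def y_def intro!: borel_measurable_continuous_onI continuous_intros)
  have mPsi: "(\<lambda>z. (\<Phi> (fst z) (snd z), fst z)) \<in> borel_measurable M"
    unfolding M_def by (rule meas_M[OF sP0, where G="\<lambda>x b. (\<Phi> x b, x)"])
      (auto simp: \<Phi>_def y_def intro!: borel_measurable_continuous_onI continuous_intros)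
  have Piy: "?\<Pi> *v y x = y x" for x unfolding y_def by (rule proj_idem_v[OF X])
  have sg2: "(sg b)\<^sup>2 = 1" for b by (simp add: sg_def)
  have sgsum: "sg True + sg False = 0" by (simp add: sg_def)
  have iy: "integrable P0 y"
  proof -
    have "integrable P0 (\<lambda>x. ?\<Pi> *v x - ?\<Pi> *v m0)"
      using integrable_bounded_linear[OF matrix_vector_mul_bounded_linear[of ?\<Pi>] Q2_int_id[OF P0]] by simp
    moreover have "y = (\<lambda>x. ?\<Pi> *v x - ?\<Pi> *v m0)"
      by (simp add: fun_eq_iff y_def matrix_vector_mult_diff_distrib)
    ultimately show ?thesis by simp
  qed
  have ey: "(\<integral>x. y x \<partial>P0) = 0"
  proof -
    have "(\<integral>x. y x \<partial>P0) = (\<integral>x. ?\<Pi> *v x \<partial>P0) - (\<integral>x. ?\<Pi> *v m0 \<partial>P0)"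
      unfolding y_def matrix_vector_mult_diff_distrib
      using integrable_bounded_linear[OF matrix_vector_mul_bounded_linear[of ?\<Pi>] Q2_int_id[OF P0]]
      by (simp add: Bochner_Integration.integral_diff)
    also have "(\<integral>x. ?\<Pi> *v x \<partial>P0) = ?\<Pi> *v m0"
      using integral_bounded_linear[OF matrix_vector_mul_bounded_linear[of ?\<Pi>] Q2_int_id[OF P0]]
      by (simp add: m0_def mean_def)
    finally show ?thesis by (simp add: P0.prob_space)
  qed
  have iyy: "integrable P0 (\<lambda>x. (norm (y x))\<^sup>2)" unfolding y_def by (rule Q2_int_proj[OF P0 X])
  have iyv: "integrable P0 (\<lambda>x. y x \<bullet> v)" using iy by simp
  have iPhi: "integrable P0 (\<lambda>x. \<Phi> x b)" for b
    unfolding \<Phi>_def using Q2_int_id[OF P0] iy by simp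
  have Phib: "norm (\<Phi> x b) \<le> (1 + c) * norm x + (c * norm m0 + r)" for x b
  proof -
    have "norm (\<Phi> x b) \<le> norm x + norm (c *\<^sub>R y x) + norm ((sg b * r) *\<^sub>R v)"
      unfolding \<Phi>_def by (rule order.trans[OF norm_triangle_ineq add_right_mono[OF norm_triangle_ineq]])
    also have "norm (c *\<^sub>R y x) \<le> c * (norm x + norm m0)"
    proof -
      have "norm (y x) \<le> norm (x - m0)" unfolding y_def by (rule proj_norm_le[OF X])
      also have "\<dots> \<le> norm x + norm m0" by (rule norm_triangle_ineq4)
      finally show ?thesis using c by (simp add: mult_left_mono)
    qed
    also have "norm ((sg b * r) *\<^sub>R v) = r" using v r by (simp add: sg_def)
    finally show ?thesis by (simp add: algebra_simps)
  qed
  have iPhi2: "integrable P0 (\<lambda>x. (norm (\<Phi> x b))\<^sup>2)" for b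
  proof (rule Q2_integrable[OF P0])
    show "(\<lambda>x. (norm (\<Phi> x b))\<^sup>2) \<in> borel_measurable borel"
      by (auto simp: \<Phi>_def y_def intro!: borel_measurable_continuous_onI continuous_intros)
    show "norm ((norm (\<Phi> x b))\<^sup>2) \<le> (2 * (1 + c)\<^sup>2) * (norm x)\<^sup>2 + 2 * (c * norm m0 + r)\<^sup>2" for x
      by (rule sq_lin_bound[OF _ Phib]) (use c r in auto)
  qed
  define P where "P = distr M borel (\<lambda>z. \<Phi> (fst z) (snd z))"
  have pP: "prob_space P" unfolding P_def by (rule M.prob_space_distr[OF mPhi])
  have sP: "sets P = sets borel" by (simp add: P_def)
  have mN: "(\<lambda>x::real^'d. (norm x)\<^sup>2) \<in> borel_measurable borel"
    by (auto intro!: borel_measurable_continuous_onI continuous_intros)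
  have PQ2: "P \<in> Q2"
  proof -
    have "integrable M (\<lambda>z. (norm (\<Phi> (fst z) (snd z)))\<^sup>2)"
      unfolding M_def by (rule int_M(1)[OF P0, where G="\<lambda>x b. (norm (\<Phi> x b))\<^sup>2"])
        (auto simp: \<Phi>_def y_def intro!: borel_measurable_continuous_onI continuous_intros iPhi2[unfolded \<Phi>_def y_def])
    then have "integrable P (\<lambda>x. (norm x)\<^sup>2)"
      unfolding P_def using integrable_distr_eq[OF mPhi mN] by simp
    then show ?thesis using pP sP by (simp add: Q2_def)
  qed
  have meanP: "mean P = m0"
  proof -
    have "mean P = (\<integral>z. \<Phi> (fst z) (snd z) \<partial>M)"
      unfolding mean_def P_def by (rule integral_distr[OF mPhi]) simp
    also have "\<dots> = (\<integral>x. (1/2) *\<^sub>R (\<Phi> x True + \<Phi> x False) \<partial>P0)"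
      unfolding M_def by (rule int_M(2)[OF P0])
        (auto simp: \<Phi>_def y_def intro!: borel_measurable_continuous_onI continuous_intros iPhi[unfolded \<Phi>_def y_def])
    also have "\<dots> = (\<integral>x. x + c *\<^sub>R y x \<partial>P0)"
    proof (rule Bochner_Integration.integral_cong[OF refl])
      fix x
      have "\<Phi> x True + \<Phi> x False = (x + c *\<^sub>R y x) + (x + c *\<^sub>R y x)"
        by (simp add: \<Phi>_def sg_def)
      also have "\<dots> = 2 *\<^sub>R (x + c *\<^sub>R y x)" by (rule scaleR_2[symmetric])
      finally show "(1/2) *\<^sub>R (\<Phi> x True + \<Phi> x False) = x + c *\<^sub>R y x" by simp
    qed
    also have "\<dots> = m0" using Q2_int_id[OF P0] iy ey by (simp add: m0_def mean_def)
    finally show ?thesis .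
  qed
  have valP: "(\<integral>x. (norm (?\<Pi> *v (x - mean P)))\<^sup>2 \<partial>P) = (1 + c)\<^sup>2 * \<tau> + r\<^sup>2"
  proof -
    have pw: "(norm (?\<Pi> *v (\<Phi> x b - m0)))\<^sup>2 = (1 + c)\<^sup>2 * (norm (y x))\<^sup>2 + (2 * (1 + c) * r) * sg b * (y x \<bullet> v) + r\<^sup>2" for x b
    proof -
      have e1: "\<Phi> x b - m0 = (x - m0) + c *\<^sub>R y x + (sg b * r) *\<^sub>R v" by (simp add: \<Phi>_def)
      have "?\<Pi> *v (\<Phi> x b - m0) = ?\<Pi> *v (x - m0) + c *\<^sub>R (?\<Pi> *v y x) + (sg b * r) *\<^sub>R (?\<Pi> *v v)"
        unfolding e1 by (simp only: matrix_vector_right_distrib matrix_vector_mult_scaleR)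
      also have "\<dots> = y x + c *\<^sub>R y x + (sg b * r) *\<^sub>R v" using Piy[of x, unfolded y_def] v(2) unfolding y_def by simp
      also have "\<dots> = (1 + c) *\<^sub>R y x + (sg b * r) *\<^sub>R v" by (simp add: scaleR_add_left)
      finally have "?\<Pi> *v (\<Phi> x b - m0) = (1 + c) *\<^sub>R y x + (sg b * r) *\<^sub>R v" .
      then show ?thesis using v(1) sg2[of b] by (simp add: norm_comb_sq power_mult_distrib mult_ac)
    qed
    have mG: "(\<lambda>x. (norm (?\<Pi> *v (\<Phi> x b - m0)))\<^sup>2) \<in> borel_measurable borel" for b
      by (auto simp: \<Phi>_def y_def intro!: borel_measurable_continuous_onI continuous_intros)
    have iG: "integrable P0 (\<lambda>x. (norm (?\<Pi> *v (\<Phi> x b - m0)))\<^sup>2)" for b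
      unfolding pw using iyy iyv by simp
    have "(\<integral>x. (norm (?\<Pi> *v (x - mean P)))\<^sup>2 \<partial>P) = (\<integral>z. (norm (?\<Pi> *v (\<Phi> (fst z) (snd z) - m0)))\<^sup>2 \<partial>M)"
      unfolding meanP unfolding P_def by (rule integral_distr[OF mPhi])
        (auto intro!: borel_measurable_continuous_onI continuous_intros)
    also have "\<dots> = (\<integral>x. (1/2) *\<^sub>R ((norm (?\<Pi> *v (\<Phi> x True - m0)))\<^sup>2 + (norm (?\<Pi> *v (\<Phi> x False - m0)))\<^sup>2) \<partial>P0)"
      unfolding M_def by (rule int_M(2)[OF P0 mG iG])
    also have "\<dots> = (\<integral>x. (1 + c)\<^sup>2 * (norm (y x))\<^sup>2 + r\<^sup>2 \<partial>P0)"
      by (rule Bochner_Integration.integral_cong[OF refl]) (simp only: pw, simp add: sg_def field_simps)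
    also have "\<dots> = (1 + c)\<^sup>2 * \<tau> + r\<^sup>2" using iyy by (simp add: \<tau>_def P0.prob_space)
    finally show ?thesis .
  qed
  define Q where "Q = distr M borel (\<lambda>z. (\<Phi> (fst z) (snd z), fst z))"
  have QC: "Q \<in> couplings P P0"
  proof -
    have pQ: "prob_space Q" unfolding Q_def by (rule M.prob_space_distr[OF mPsi])
    have sQ: "sets Q = sets borel" by (simp add: Q_def)
    have mfst: "fst \<in> borel_measurable (borel :: ((real^'d) \<times> (real^'d)) measure)"
      by (intro borel_measurable_continuous_onI continuous_on_fst continuous_on_id)
    have msnd: "snd \<in> borel_measurable (borel :: ((real^'d) \<times> (real^'d)) measure)"
      by (intro borel_measurable_continuous_onI continuous_on_snd continuous_on_id)
    have "distr Q borel fst = distr M borel (fst \<circ> (\<lambda>z. (\<Phi> (fst z) (snd z), fst z)))"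
      unfolding Q_def by (rule distr_distr[OF mfst mPsi])
    also have "\<dots> = P" by (simp add: P_def o_def)
    finally have d1: "distr Q borel fst = P" .
    have "distr Q borel snd = distr M borel (snd \<circ> (\<lambda>z. (\<Phi> (fst z) (snd z), fst z)))"
      unfolding Q_def by (rule distr_distr[OF msnd mPsi])
    also have "\<dots> = distr M P0 fst" by (simp add: o_def sP0 cong: distr_cong)
    also have "\<dots> = P0" unfolding M_def by (rule marg_fst[OF P0.prob_space_axioms coin_prob])
    finally have d2: "distr Q borel snd = P0" .
    show ?thesis using pQ sQ d1 d2 by (simp add: couplings_def)
  qed
  have costQ: "(\<integral>z. (norm (fst z - snd z))\<^sup>2 \<partial>Q) = c\<^sup>2 * \<tau> + r\<^sup>2"
  proof -
    have pw: "(norm (\<Phi> x b - x))\<^sup>2 = c\<^sup>2 * (norm (y x))\<^sup>2 + (2 * c * r) * sg b * (y x \<bullet> v) + r\<^sup>2" for x b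
    proof -
      have "\<Phi> x b - x = c *\<^sub>R y x + (sg b * r) *\<^sub>R v" by (simp add: \<Phi>_def)
      then show ?thesis using v(1) sg2[of b] by (simp add: norm_comb_sq power_mult_distrib mult_ac)
    qed
    have mG: "(\<lambda>x. (norm (\<Phi> x b - x))\<^sup>2) \<in> borel_measurable borel" for b
      by (auto simp: \<Phi>_def y_def intro!: borel_measurable_continuous_onI continuous_intros)
    have iG: "integrable P0 (\<lambda>x. (norm (\<Phi> x b - x))\<^sup>2)" for b
      unfolding pw using iyy iyv by simp
    have "(\<integral>z. (norm (fst z - snd z))\<^sup>2 \<partial>Q) = (\<integral>z. (norm (\<Phi> (fst z) (snd z) - fst z))\<^sup>2 \<partial>M)"
      unfolding Q_def by (subst integral_distr[OF mPsi]) (auto intro!: borel_measurable_continuous_onI continuous_intros)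
    also have "\<dots> = (\<integral>x. (1/2) *\<^sub>R ((norm (\<Phi> x True - x))\<^sup>2 + (norm (\<Phi> x False - x))\<^sup>2) \<partial>P0)"
      unfolding M_def by (rule int_M(2)[OF P0 mG iG])
    also have "\<dots> = (\<integral>x. c\<^sup>2 * (norm (y x))\<^sup>2 + r\<^sup>2 \<partial>P0)"
      by (rule Bochner_Integration.integral_cong[OF refl]) (simp only: pw, simp add: sg_def field_simps)
    also have "\<dots> = c\<^sup>2 * \<tau> + r\<^sup>2" using iyy by (simp add: \<tau>_def P0.prob_space)
    finally show ?thesis .
  qed
  show ?thesis
    using PQ2 valP QC costQ by (auto simp: \<tau>_def y_def m0_def)
qed



lemma cost_nonneg: "Q \<in> couplings P P0 \<Longrightarrow> 0 \<le> (\<integral>z. (norm (fst z - snd z :: real^'d))\<^sup>2 \<partial>Q)"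
  by (rule integral_nonneg_AE) simp

lemma W2_upper:
  fixes P P0 :: "(real^'d) measure" and X :: "real^'r^'d"
  assumes P: "P \<in> Q2" and P0: "P0 \<in> Q2" and X: "X \<in> stiefel" and W: "W2 P P0 \<le> \<rho>" and rho: "\<rho> \<ge> 0"
  shows "(\<integral>x. (norm (perp_proj X *v (x - mean P)))\<^sup>2 \<partial>P)
     \<le> (sqrt (\<integral>x. (norm (perp_proj X *v (x - mean P0)))\<^sup>2 \<partial>P0) + \<rho>)\<^sup>2"
proof -
  define V where "V = (\<integral>x. (norm (perp_proj X *v (x - mean P)))\<^sup>2 \<partial>P)"
  define T where "T = (\<integral>x. (norm (perp_proj X *v (x - mean P0)))\<^sup>2 \<partial>P0)"
  define K where "K = {(\<integral>z. (norm (fst z - snd z))\<^sup>2 \<partial>Q) | Q. Q \<in> couplings P P0}"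
  have V0: "V \<ge> 0" unfolding V_def by (rule integral_nonneg_AE) simp
  have T0: "T \<ge> 0" unfolding T_def by (rule integral_nonneg_AE) simp
  have Kne: "K \<noteq> {}" using product_coupling[OF P P0] by (auto simp: K_def)
  have W2K: "W2 P P0 = sqrt (Inf K)" by (simp add: W2_def K_def)
  have "sqrt V \<le> sqrt T + \<rho>"
  proof (rule ccontr)
    assume "\<not> sqrt V \<le> sqrt T + \<rho>"
    then have d: "sqrt V - sqrt T > \<rho>" by simp
    define d where "d = sqrt V - sqrt T"
    have dr: "d > \<rho>" unfolding d_def by (rule d)
    have dpos: "d > 0" "d > \<rho>" using dr rho by linarith+
    have "d\<^sup>2 \<le> k" if kK: "k \<in> K" for k
    proof -
      obtain Q where Q: "Q \<in> couplings P P0" and k: "k = (\<integral>z. (norm (fst z - snd z))\<^sup>2 \<partial>Q)"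
        using kK by (auto simp: K_def)
      have k0: "k \<ge> 0" using cost_nonneg[OF Q] k by simp
      have "sqrt V \<le> sqrt T + sqrt k" using coupling_bound[OF P P0 X Q] k by (simp add: V_def T_def)
      then have "d \<le> sqrt k" by (simp add: d_def)
      then have "d\<^sup>2 \<le> (sqrt k)\<^sup>2" using dpos by (simp add: power_mono)
      then show ?thesis using k0 by simp
    qed
    then have "d\<^sup>2 \<le> Inf K" using Kne by (intro cInf_greatest) auto
    then have "sqrt (d\<^sup>2) \<le> sqrt (Inf K)" by (rule real_sqrt_le_mono)
    then have "d \<le> W2 P P0" using dpos W2K by simp
    then show False using W dpos by simp
  qed
  then have "(sqrt V)\<^sup>2 \<le> (sqrt T + \<rho>)\<^sup>2" by (rule power_mono) (simp add: V0)
  then show ?thesis using V0 by (simp add: V_def T_def)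
qed

lemma W2_le_cost:
  fixes P P0 :: "(real^'d) measure"
  assumes Q: "Q \<in> couplings P P0"
  shows "W2 P P0 \<le> sqrt (\<integral>z. (norm (fst z - snd z))\<^sup>2 \<partial>Q)"
proof -
  define K where "K = {(\<integral>z. (norm (fst z - snd z))\<^sup>2 \<partial>Q) | Q. Q \<in> couplings P P0}"
  have bdd: "bdd_below K" unfolding K_def by (rule bdd_belowI[of _ 0]) (auto simp: cost_nonneg)
  have "Inf K \<le> (\<integral>z. (norm (fst z - snd z))\<^sup>2 \<partial>Q)"
    by (rule cInf_lower[OF _ bdd]) (use Q in \<open>auto simp: K_def\<close>)
  then show ?thesis by (simp add: W2_def K_def[symmetric])
qed

lemma phi_value:
  fixes P0 :: "(real^'d) measure" and X :: "real^'r^'d"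
  assumes rd: "CARD('r) < CARD('d)" and P0: "P0 \<in> Q2" and rho: "\<rho> \<ge> 0" and X: "X \<in> stiefel"
  shows "phi P0 \<rho> X = (sqrt (trace (perp_proj X ** covar P0)) + \<rho>)\<^sup>2"
proof -
  define T where "T = (\<integral>x. (norm (perp_proj X *v (x - mean P0)))\<^sup>2 \<partial>P0)"
  have T: "T = trace (perp_proj X ** covar P0)" unfolding T_def by (rule val_trace[OF P0 X])
  have T0: "T \<ge> 0" unfolding T_def by (rule integral_nonneg_AE) simp
  define S where "S = {(\<integral>x. ((norm (perp_proj X *v (x - mean P)))\<^sup>2) \<partial>P) | P. P \<in> Q2 \<and> W2 P P0 \<le> \<rho>}"
  obtain v where v: "norm v = 1" "perp_proj X *v v = v" using exists_perp_unit[OF rd] by blast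
  define c where "c = (if T > 0 then \<rho> / sqrt T else 0)"
  define r where "r = (if T > 0 then 0 else \<rho>)"
  have c0: "c \<ge> 0" and r0: "r \<ge> 0" using rho T0 by (auto simp: c_def r_def)
  have val: "(1 + c)\<^sup>2 * T + r\<^sup>2 = (sqrt T + \<rho>)\<^sup>2"
  proof (cases "T > 0")
    case True
    have "(1 + \<rho> / sqrt T) * sqrt T = sqrt T + \<rho>" using True by (simp add: distrib_right)
    then have "((1 + \<rho> / sqrt T) * sqrt T)\<^sup>2 = (sqrt T + \<rho>)\<^sup>2" by simp
    then show ?thesis using True T0 by (simp add: c_def r_def power_mult_distrib)
  next
    case False
    then have "T = 0" using T0 by simp
    then show ?thesis by (simp add: c_def r_def)
  qed
  have cost: "c\<^sup>2 * T + r\<^sup>2 = \<rho>\<^sup>2"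
  proof (cases "T > 0")
    case True
    then show ?thesis by (simp add: c_def r_def power_divide)
  next
    case False
    then have "T = 0" using T0 by simp
    then show ?thesis by (simp add: c_def r_def)
  qed
  obtain P where P: "P \<in> Q2"
    and vP: "(\<integral>x. (norm (perp_proj X *v (x - mean P)))\<^sup>2 \<partial>P) = (1 + c)\<^sup>2 * T + r\<^sup>2"
    and Q: "\<exists>Q\<in>couplings P P0. (\<integral>z. (norm (fst z - snd z))\<^sup>2 \<partial>Q) = c\<^sup>2 * T + r\<^sup>2"
    using construct[OF P0 X v c0 r0] unfolding T_def by blast
  have WP: "W2 P P0 \<le> \<rho>"
  proof -
    obtain Q where "Q \<in> couplings P P0" "(\<integral>z. (norm (fst z - snd z))\<^sup>2 \<partial>Q) = \<rho>\<^sup>2"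
      using Q cost by auto
    then show ?thesis using W2_le_cost[of Q P P0] rho by simp
  qed
  have mem: "(sqrt T + \<rho>)\<^sup>2 \<in> S" unfolding S_def using P WP vP val by (auto intro!: exI[of _ P])
  have ub: "\<forall>s\<in>S. s \<le> (sqrt T + \<rho>)\<^sup>2"
    unfolding S_def T_def using W2_upper[OF _ P0 X _ rho] by auto
  have "phi P0 \<rho> X = Sup S" by (simp add: phi_def S_def)
  also have "\<dots> = (sqrt T + \<rho>)\<^sup>2" by (rule cSup_eq_maximum[OF mem]) (use ub in auto)
  finally show ?thesis by (simp add: T)
qed


theorem mainTheorem5:
  fixes P0 :: "(real^'d) measure" and \<rho> :: real
  assumes rd: "CARD('r) < CARD('d)"
    and P0: "P0 \<in> Q2"
    and rho: "\<rho> \<ge> 0"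
  shows "(\<forall>X::real^'r^'d. X \<in> stiefel \<longrightarrow>
            phi P0 \<rho> X = (sqrt (trace (perp_proj X ** covar P0)) + \<rho>)\<^sup>2)
       \<and> (\<forall>(s::real^'r^'d \<Rightarrow> real) (X::real^'r^'d). X \<in> stiefel \<longrightarrow>
            phi P0 \<rho> X + s X = trace (perp_proj X ** covar P0) + s X
              + 2 * \<rho> * frob (perp_proj X ** psd_sqrt (covar P0)) + \<rho>\<^sup>2)
       \<and> (\<forall>(s::real^'r^'d \<Rightarrow> real). \<forall>X\<in>stiefel. \<forall>Y\<in>stiefel.
            (phi P0 \<rho> X + s X \<le> phi P0 \<rho> Y + s Y) \<longleftrightarrow>
            (trace (perp_proj X ** covar P0) + s X + 2 * \<rho> * frob (perp_proj X ** psd_sqrt (covar P0))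
              \<le> trace (perp_proj Y ** covar P0) + s Y + 2 * \<rho> * frob (perp_proj Y ** psd_sqrt (covar P0))))"
  proof -
  have phiv: "phi P0 \<rho> X = (sqrt (trace (perp_proj X ** covar P0)) + \<rho>)\<^sup>2" if X: "X \<in> stiefel" for X :: "real^'r^'d"
    by (rule phi_value[OF rd P0 rho X])
  have psdC: "psd (covar P0)" by (rule covar_psd[OF P0])
  have eq2: "phi P0 \<rho> X = trace (perp_proj X ** covar P0)
              + 2 * \<rho> * frob (perp_proj X ** psd_sqrt (covar P0)) + \<rho>\<^sup>2" if X: "X \<in> stiefel" for X :: "real^'r^'d"
  proof -
    have t0: "trace (perp_proj X ** covar P0) \<ge> 0"
      unfolding val_trace[OF P0 X, symmetric] by (rule integral_nonneg_AE) simp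
    have "phi P0 \<rho> X = (sqrt (trace (perp_proj X ** covar P0)) + \<rho>)\<^sup>2" by (rule phiv[OF X])
    also have "\<dots> = trace (perp_proj X ** covar P0) + 2 * \<rho> * sqrt (trace (perp_proj X ** covar P0)) + \<rho>\<^sup>2"
      using t0 by (simp add: power2_sum)
    finally show ?thesis by (simp add: frob_proj_sqrt[OF X psdC])
  qed
  show ?thesis
  proof (intro conjI allI impI ballI)
    fix X :: "real^'r^'d" assume "X \<in> stiefel"
    then show "phi P0 \<rho> X = (sqrt (trace (perp_proj X ** covar P0)) + \<rho>)\<^sup>2" by (rule phiv)
  next
    fix s :: "real^'r^'d \<Rightarrow> real" and X :: "real^'r^'d" assume X: "X \<in> stiefel"
    show "phi P0 \<rho> X + s X = trace (perp_proj X ** covar P0) + s X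
              + 2 * \<rho> * frob (perp_proj X ** psd_sqrt (covar P0)) + \<rho>\<^sup>2"
      using eq2[OF X] by simp
  next
    fix s :: "real^'r^'d \<Rightarrow> real" and X Y :: "real^'r^'d" assume X: "X \<in> stiefel" and Y: "Y \<in> stiefel"
    show "(phi P0 \<rho> X + s X \<le> phi P0 \<rho> Y + s Y) \<longleftrightarrow>
            (trace (perp_proj X ** covar P0) + s X + 2 * \<rho> * frob (perp_proj X ** psd_sqrt (covar P0))
              \<le> trace (perp_proj Y ** covar P0) + s Y + 2 * \<rho> * frob (perp_proj Y ** psd_sqrt (covar P0)))"
      using eq2[OF X] eq2[OF Y] by linarith
  qed
qed

end
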